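(* Let $T\ge1$, $n\ge2$, $\mu\in\mathbb{R}$, $\sigma>0$, $z^*\in\mathbb{R}$, $\tau\in\{1,\dots,T\}$. Under $\mathbf{H_0}$ the real numbers $X_{t,k}$ ($t\le T$, $k\le n$) are i.i.d. $\mathcal{N}(\mu,\sigma^2)$; under $\mathbf{H_1^\tau}$ they are generated the same way and then $X_{\tau,J}$ is replaced by $z^*$, with $J$ uniform on $\{1,\dots,n\}$ independent of the data. Let $\bar X_\tau=\frac1n\sum_{k=1}^nX_{\tau,k}$ and \[ \log\mathrm{LR}_\tau=-\frac12\log\Big(\frac{n-1}{n}\Big)-\frac{n}{2(n-1)\sigma^2}(\bar X_\tau-\mu)^2+\frac{(z^*-\mu)n}{(n-1)\sigma^2}(\bar X_\tau-\mu)-\frac{(z^*-\mu)^2}{2(n-1)\sigma^2}. \] For a threshold $\gamma\in\mathbb{R}$ let $\alpha(\gamma)=\mathbb{P}_{\mathbf{H_0}}(\log\mathrm{LR}_\tau\ge\gamma)$. Define $\gamma_{\max}=\frac12\big[\frac{(z^*-\mu)^2}{\sigma^2}-\log\big(\frac{n-1}{n}\big)\big]$, $m^*=\frac{(z^*-\mu)^2}{\sigma^2}$, $a=\sqrt{m^*n}$ and, for $\gamma\le\gamma_{\max}$, $b(\gamma)=\sqrt{(n-1)\big(m^*-\log(1-\frac1n)-2\gamma\big)}$. Then $\alpha(\gamma)=0$ for $\gamma>\gamma_{\max}$, and for $\gamma\le\gamma_{\max}$, \[ \alpha(\gamma)=\Phi(a+b(\gamma))-\Phi(a-b(\gamma)),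 \] where $\Phi$ is the standard normal cumulative distribution function.
   Context: $\alpha(\gamma)$ is the Type I error of the test that declares "target present" when $\log\mathrm{LR}_\tau\ge\gamma$. *)

theory Defs
  imports "HOL-Probability.Probability"
begin

definition Phi :: "real \<Rightarrow> real" where
  "Phi x = measure (density lborel std_normal_density) {..x}"

definition xbar :: "nat \<Rightarrow> (nat \<Rightarrow> nat \<Rightarrow> real) \<Rightarrow> nat \<Rightarrow> real" where
  "xbar n x \<tau> = (\<Sum>k=1..n. x \<tau> k) / real n"

definition logLR :: "nat \<Rightarrow> real \<Rightarrow> real \<Rightarrow> real \<Rightarrow> real \<Rightarrow> real" where
  "logLR n \<mu> \<sigma> zs xb =
     - (1/2) * ln ((real n - 1) / real n)
     - real n / (2 * (real n - 1) * \<sigma>\<^sup>2) * (xb - \<mu>)\<^sup>2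
     + (zs - \<mu>) * real n / ((real n - 1) * \<sigma>\<^sup>2) * (xb - \<mu>)
     - (zs - \<mu>)\<^sup>2 / (2 * (real n - 1) * \<sigma>\<^sup>2)"

definition gamma_max :: "nat \<Rightarrow> real \<Rightarrow> real \<Rightarrow> real \<Rightarrow> real" where
  "gamma_max n \<mu> \<sigma> zs = (1/2) * ((zs - \<mu>)\<^sup>2 / \<sigma>\<^sup>2 - ln ((real n - 1) / real n))"

definition mstar :: "real \<Rightarrow> real \<Rightarrow> real \<Rightarrow> real" where
  "mstar \<mu> \<sigma> zs = (zs - \<mu>)\<^sup>2 / \<sigma>\<^sup>2"

definition a_const :: "nat \<Rightarrow> real \<Rightarrow> real \<Rightarrow> real \<Rightarrow> real" where
  "a_const n \<mu> \<sigma> zs = sqrt (mstar \<mu> \<sigma> zs * real n)"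

definition b_fun :: "nat \<Rightarrow> real \<Rightarrow> real \<Rightarrow> real \<Rightarrow> real \<Rightarrow> real" where
  "b_fun n \<mu> \<sigma> zs \<gamma> =
     sqrt ((real n - 1) * (mstar \<mu> \<sigma> zs - ln (1 - 1 / real n) - 2 * \<gamma>))"

definition alpha :: "'w measure \<Rightarrow> (nat \<Rightarrow> nat \<Rightarrow> 'w \<Rightarrow> real) \<Rightarrow> nat \<Rightarrow> nat
      \<Rightarrow> real \<Rightarrow> real \<Rightarrow> real \<Rightarrow> real \<Rightarrow> real" where
  "alpha M X n \<tau> \<mu> \<sigma> zs \<gamma> =
     measure M {\<omega> \<in> space M. logLR n \<mu> \<sigma> zs (xbar n (\<lambda>t k. X t k \<omega>) \<tau>) \<ge> \<gamma>}"

end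

theory Submission
  imports Defs
begin

lemma singleton_null: "emeasure (density lborel std_normal_density) {y::real} = 0"
proof -
  have AE: "AE x in lborel. ennreal (std_normal_density x) * indicator {y} x = 0"
    using AE_lborel_singleton[of y] by eventually_elim auto
  have "emeasure (density lborel std_normal_density) {y} = (\<integral>\<^sup>+x. ennreal (std_normal_density x) * indicator {y} x \<partial>lborel)"
    by (subst emeasure_density) auto
  also have "\<dots> = (\<integral>\<^sup>+x. 0 \<partial>(lborel::real measure))"
    by (rule nn_integral_cong_AE[OF AE])
  finally show ?thesis by simp
qed

lemma Phi_diff:
  assumes "y \<le> x"
  shows "measure (density lborel std_normal_density) {y..x} = Phi x - Phi y"
proof -
  let ?N = "density lborel std_normal_density"
  interpret N: prob_space ?N by (rule prob_space_normal_density) simp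
  have m0: "measure ?N {y} = 0" using singleton_null by (simp add: measure_def)
  have "{..x} = {..<y} \<union> {y..x}" using assms by auto
  moreover have "measure ?N ({..<y} \<union> {y..x}) = measure ?N {..<y} + measure ?N {y..x}"
    by (rule N.finite_measure_Union) auto
  moreover have "{..y} = {..<y} \<union> {y}" by auto
  moreover have "measure ?N ({..<y} \<union> {y}) = measure ?N {..<y} + measure ?N {y}"
    by (rule N.finite_measure_Union) auto
  ultimately show ?thesis using m0 unfolding Phi_def by simp
qed

lemma alg0:
  fixes n :: nat and \<sigma> \<mu> zs y L :: real
  assumes "n \<ge> 2" "\<sigma> > 0"
  shows "2 * (real n - 1) * \<sigma>\<^sup>2 / real n * ((- (1/2) * L
     - real n / (2 * (real n - 1) * \<sigma>\<^sup>2) * (y - \<mu>)\<^sup>2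
     + (zs - \<mu>) * real n / ((real n - 1) * \<sigma>\<^sup>2) * (y - \<mu>)
     - (zs - \<mu>)\<^sup>2 / (2 * (real n - 1) * \<sigma>\<^sup>2))) = -(real n - 1) * \<sigma>\<^sup>2 * L / real n - (y - \<mu>)\<^sup>2 + 2 * (zs - \<mu>) * (y - \<mu>) - (zs - \<mu>)\<^sup>2 / real n"
proof -
  have n1: "real n - 1 \<noteq> 0" using assms by simp
  have np: "real n \<noteq> 0" using assms by simp
  have s: "\<sigma>\<^sup>2 \<noteq> 0" using assms by simp
  define c where "c = 2 * (real n - 1) * \<sigma>\<^sup>2 / real n"
  have 1: "c * (real n / (2 * (real n - 1) * \<sigma>\<^sup>2)) = 1" unfolding c_def using n1 np s by (simp add: field_simps)
  have 2: "c * ((zs - \<mu>) * real n / ((real n - 1) * \<sigma>\<^sup>2)) = 2 * (zs - \<mu>)" unfolding c_def using n1 np s by (simp add: field_simps)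
  have 3: "c * ((zs - \<mu>)\<^sup>2 / (2 * (real n - 1) * \<sigma>\<^sup>2)) = (zs - \<mu>)\<^sup>2 / real n" unfolding c_def using n1 np s by (simp add: field_simps)
  have 4: "c * (- (1/2) * L) = -(real n - 1) * \<sigma>\<^sup>2 * L / real n" unfolding c_def using np by (simp add: field_simps)
  have "c * ((- (1/2) * L
     - real n / (2 * (real n - 1) * \<sigma>\<^sup>2) * (y - \<mu>)\<^sup>2
     + (zs - \<mu>) * real n / ((real n - 1) * \<sigma>\<^sup>2) * (y - \<mu>)
     - (zs - \<mu>)\<^sup>2 / (2 * (real n - 1) * \<sigma>\<^sup>2))) = c * (- (1/2) * L)
     - (c * (real n / (2 * (real n - 1) * \<sigma>\<^sup>2))) * (y - \<mu>)\<^sup>2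
     + c * ((zs - \<mu>) * real n / ((real n - 1) * \<sigma>\<^sup>2)) * (y - \<mu>)
     - c * ((zs - \<mu>)\<^sup>2 / (2 * (real n - 1) * \<sigma>\<^sup>2))" by (simp add: algebra_simps)
  note eq = this[unfolded 1 2 3 4]
  show ?thesis unfolding c_def[symmetric] using eq by simp
qed

lemma alg1:
  fixes n :: nat and \<sigma> \<mu> zs \<gamma> y :: real
  assumes "n \<ge> 2" "\<sigma> > 0"
  shows "(\<gamma> \<le> logLR n \<mu> \<sigma> zs y) \<longleftrightarrow>
     (y - zs)\<^sup>2 \<le> \<sigma>\<^sup>2 / real n * ((real n - 1) * (mstar \<mu> \<sigma> zs - ln (1 - 1 / real n) - 2 * \<gamma>))"
proof -
  have n1: "real n - 1 > 0" using assms by simp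
  have np: "real n > 0" using assms by simp
  have L: "ln (1 - 1 / real n) = ln ((real n - 1) / real n)" using np by (simp add: field_simps)
  define L where "L = ln ((real n - 1) / real n)"
  define c where "c = 2 * (real n - 1) * \<sigma>\<^sup>2 / real n"
  have cp: "c > 0" unfolding c_def using n1 np assms by simp
  have "(\<gamma> \<le> logLR n \<mu> \<sigma> zs y) \<longleftrightarrow> c * \<gamma> \<le> c * logLR n \<mu> \<sigma> zs y"
    using cp by simp
  also have "c * logLR n \<mu> \<sigma> zs y = -(real n - 1) * \<sigma>\<^sup>2 * L / real n - (y - \<mu>)\<^sup>2 + 2 * (zs - \<mu>) * (y - \<mu>) - (zs - \<mu>)\<^sup>2 / real n"
    unfolding c_def logLR_def L_def by (rule alg0[OF assms])
  also have "\<dots> - c * \<gamma> = \<sigma>\<^sup>2 / real n * ((real n - 1) * (mstar \<mu> \<sigma> zs - L - 2 * \<gamma>)) - (y - zs)\<^sup>2"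
    unfolding c_def mstar_def using n1 np assms by (simp add: field_simps power2_eq_square)
  then have "(c * \<gamma> \<le> -(real n - 1) * \<sigma>\<^sup>2 * L / real n - (y - \<mu>)\<^sup>2 + 2 * (zs - \<mu>) * (y - \<mu>) - (zs - \<mu>)\<^sup>2 / real n)
     \<longleftrightarrow> (y - zs)\<^sup>2 \<le> \<sigma>\<^sup>2 / real n * ((real n - 1) * (mstar \<mu> \<sigma> zs - L - 2 * \<gamma>))" by linarith
  finally show ?thesis unfolding L L_def .
qed

lemma alg2:
  fixes n :: nat and \<sigma> \<mu> zs v s :: real
  assumes "n \<ge> 2" "\<sigma> > 0" "s = (if zs - \<mu> \<ge> 0 then 1 else -1)"
  shows "(v / real n - zs)\<^sup>2 = \<sigma>\<^sup>2 / real n *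
     ((- s * \<mu> * sqrt (real n) / \<sigma> + s / (sqrt (real n) * \<sigma>) * v) - a_const n \<mu> \<sigma> zs)\<^sup>2"
proof -
  have np: "real n > 0" using assms by simp
  have sq: "sqrt (real n) * sqrt (real n) = real n" using np by simp
  have sp: "sqrt (real n) > 0" using np by simp
  have a: "a_const n \<mu> \<sigma> zs = s * (zs - \<mu>) * sqrt (real n) / \<sigma>"
  proof -
    have "a_const n \<mu> \<sigma> zs = sqrt ((zs - \<mu>)\<^sup>2) * sqrt (real n) / sqrt (\<sigma>\<^sup>2)"
      unfolding a_const_def mstar_def by (simp add: real_sqrt_mult real_sqrt_divide)
    also have "\<dots> = \<bar>zs - \<mu>\<bar> * sqrt (real n) / \<sigma>" using assms by simp
    finally show ?thesis using assms by auto
  qed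
  have "(- s * \<mu> * sqrt (real n) / \<sigma> + s / (sqrt (real n) * \<sigma>) * v) - a_const n \<mu> \<sigma> zs
     = s * sqrt (real n) / \<sigma> * (v / real n - zs)"
    unfolding a using sp assms(2) sq[symmetric] by (simp add: field_simps)
  then have "\<sigma>\<^sup>2 / real n * ((- s * \<mu> * sqrt (real n) / \<sigma> + s / (sqrt (real n) * \<sigma>) * v) - a_const n \<mu> \<sigma> zs)\<^sup>2
     = \<sigma>\<^sup>2 / real n * (s\<^sup>2 * (sqrt (real n))\<^sup>2 / \<sigma>\<^sup>2 * (v / real n - zs)\<^sup>2)"
    by (simp add: power_mult_distrib power_divide)
  also have "\<dots> = (v / real n - zs)\<^sup>2" using assms np by (simp add: field_simps)
  finally show ?thesis by simp
qed


theorem lemma3p5: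
  fixes M :: "'w measure" and X :: "nat \<Rightarrow> nat \<Rightarrow> 'w \<Rightarrow> real"
    and T n \<tau> :: nat and \<mu> \<sigma> zs \<gamma> :: real
  assumes "prob_space M"
    and "T \<ge> 1" and "n \<ge> 2" and "\<sigma> > 0" and "\<tau> \<in> {1..T}"
    and "prob_space.indep_vars M (\<lambda>_. borel) (\<lambda>p. X (fst p) (snd p)) ({1..T} \<times> {1..n})"
    and "\<And>t k. t \<in> {1..T} \<Longrightarrow> k \<in> {1..n} \<Longrightarrow>
           distributed M lborel (X t k) (\<lambda>x. ennreal (normal_density \<mu> \<sigma> x))"
  shows "(\<gamma> > gamma_max n \<mu> \<sigma> zs \<longrightarrow> alpha M X n \<tau> \<mu> \<sigma> zs \<gamma> = 0)
       \<and> (\<gamma> \<le> gamma_max n \<mu> \<sigma> zs \<longrightarrow>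
            alpha M X n \<tau> \<mu> \<sigma> zs \<gamma> =
              Phi (a_const n \<mu> \<sigma> zs + b_fun n \<mu> \<sigma> zs \<gamma>)
              - Phi (a_const n \<mu> \<sigma> zs - b_fun n \<mu> \<sigma> zs \<gamma>))"
proof -
  interpret prob_space M by (rule assms(1))
  have np: "real n > 0" using assms by simp
  have sp: "sqrt (real n) > 0" using np by simp
  define S where "S = (\<lambda>\<omega>. \<Sum>k=1..n. X \<tau> k \<omega>)"
  have "distributed M lborel (\<lambda>x. \<Sum>p\<in>{\<tau>}\<times>{1..n}. X (fst p) (snd p) x)
     (normal_density (\<Sum>p\<in>{\<tau>}\<times>{1..n}. \<mu>) (sqrt (\<Sum>p\<in>{\<tau>}\<times>{1..n}. \<sigma>\<^sup>2)))"
  proof (rule sum_indep_normal)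
    show "finite ({\<tau>}\<times>{1..n})" by simp
    show "{\<tau>}\<times>{1..n} \<noteq> {}" using assms by auto
    show "indep_vars (\<lambda>_. borel) (\<lambda>p. X (fst p) (snd p)) ({\<tau>}\<times>{1..n})"
      by (rule indep_vars_subset[OF assms(6)]) (use assms(5) in auto)
    show "0 < \<sigma>" by (rule assms(4))
    fix p assume "p \<in> {\<tau>}\<times>{1..n}"
    then show "distributed M lborel (X (fst p) (snd p)) (normal_density \<mu> \<sigma>)"
      using assms(5,7) by auto
  qed
  moreover have "(\<lambda>x. \<Sum>p\<in>{\<tau>}\<times>{1..n}. X (fst p) (snd p) x) = S"
  proof -
    have e: "{\<tau>}\<times>{1..n} = Pair \<tau> ` {1..n}" by auto
    have i: "inj_on (Pair \<tau>) {1..n}" by (simp add: inj_on_def)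
    show ?thesis unfolding S_def e by (intro ext, subst sum.reindex[OF i]) simp
  qed
  moreover have "(\<Sum>p\<in>{\<tau>}\<times>{1..n}. \<mu>) = real n * \<mu>" by simp
  moreover have "sqrt (\<Sum>p\<in>{\<tau>}\<times>{1..n}. \<sigma>\<^sup>2) = sqrt (real n) * \<sigma>"
    using assms(4) by (simp add: real_sqrt_mult)
  ultimately have Sdist: "distributed M lborel S (normal_density (real n * \<mu>) (sqrt (real n) * \<sigma>))"
    by simp
  define s :: real where "s = (if zs - \<mu> \<ge> 0 then 1 else -1)"
  have s0: "s \<noteq> 0" "\<bar>s\<bar> = 1" unfolding s_def by auto
  define \<alpha> where "\<alpha> = s / (sqrt (real n) * \<sigma>)"
  define \<beta> where "\<beta> = - s * \<mu> * sqrt (real n) / \<sigma>"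
  define W where "W = (\<lambda>\<omega>. \<beta> + \<alpha> * S \<omega>)"
  have "distributed M lborel W (normal_density (\<beta> + \<alpha> * (real n * \<mu>)) (\<bar>\<alpha>\<bar> * (sqrt (real n) * \<sigma>)))"
    unfolding W_def
    by (rule normal_density_affine[OF Sdist]) (use sp assms(4) s0 in \<open>auto simp: \<alpha>_def\<close>)
  moreover have "\<beta> + \<alpha> * (real n * \<mu>) = 0"
  proof -
    have gen: "\<And>r. r > 0 \<Longrightarrow> s / (r * \<sigma>) * (r * r * \<mu>) = s * \<mu> * r / \<sigma>"
      using assms(4) by (simp add: field_simps)
    have "real n = sqrt (real n) * sqrt (real n)" using np by simp
    then have "\<alpha> * (real n * \<mu>) = s * \<mu> * sqrt (real n) / \<sigma>"
      unfolding \<alpha>_def using gen[OF sp] by metis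
    then show ?thesis unfolding \<beta>_def by simp
  qed
  moreover have "\<bar>\<alpha>\<bar> * (sqrt (real n) * \<sigma>) = 1"
    unfolding \<alpha>_def using s0 sp assms(4) by (simp add: abs_mult)
  ultimately have Wdist: "distributed M lborel W std_normal_density" by simp
  define K where "K = (real n - 1) * (mstar \<mu> \<sigma> zs - ln (1 - 1 / real n) - 2 * \<gamma>)"
  define A where "A = {x::real. (x - a_const n \<mu> \<sigma> zs)\<^sup>2 \<le> K}"
  have ev: "{\<omega> \<in> space M. logLR n \<mu> \<sigma> zs (xbar n (\<lambda>t k. X t k \<omega>) \<tau>) \<ge> \<gamma>} = W -` A \<inter> space M"
  proof -
    have "\<gamma> \<le> logLR n \<mu> \<sigma> zs (xbar n (\<lambda>t k. X t k \<omega>) \<tau>) \<longleftrightarrow> W \<omega> \<in> A" for \<omega>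
    proof -
      have "xbar n (\<lambda>t k. X t k \<omega>) \<tau> = S \<omega> / real n" unfolding xbar_def S_def by simp
      then have "\<gamma> \<le> logLR n \<mu> \<sigma> zs (xbar n (\<lambda>t k. X t k \<omega>) \<tau>) \<longleftrightarrow>
          (S \<omega> / real n - zs)\<^sup>2 \<le> \<sigma>\<^sup>2 / real n * K"
        unfolding K_def using alg1[OF assms(3,4)] by simp
      also have "(S \<omega> / real n - zs)\<^sup>2 = \<sigma>\<^sup>2 / real n * (W \<omega> - a_const n \<mu> \<sigma> zs)\<^sup>2"
        unfolding W_def \<alpha>_def \<beta>_def using alg2[OF assms(3,4) s_def] by simp
      also have "\<sigma>\<^sup>2 / real n * (W \<omega> - a_const n \<mu> \<sigma> zs)\<^sup>2 \<le> \<sigma>\<^sup>2 / real n * K \<longleftrightarrow> W \<omega> \<in> A"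
      proof -
        have "\<sigma>\<^sup>2 / real n > 0" using assms(4) np by simp
        then show ?thesis unfolding A_def by (simp only: mem_Collect_eq mult_le_cancel_left_pos)
      qed
      finally show ?thesis .
    qed
    then show ?thesis by auto
  qed
  have Ameas: "A \<in> sets lborel" unfolding A_def by measurable
  have alpha_eq: "alpha M X n \<tau> \<mu> \<sigma> zs \<gamma> = measure (density lborel std_normal_density) A"
  proof -
    have "alpha M X n \<tau> \<mu> \<sigma> zs \<gamma> = measure M (W -` A \<inter> space M)"
      unfolding alpha_def ev ..
    also have "\<dots> = measure (distr M lborel W) A"
      by (rule measure_distr[symmetric, OF distributed_measurable[OF Wdist] Ameas])
    also have "distr M lborel W = density lborel std_normal_density"
      using distributed_distr_eq_density[OF Wdist] .
    finally show ?thesis .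
  qed
  have Lq: "ln (1 - 1 / real n) = ln ((real n - 1) / real n)" using np by (simp add: field_simps)
  have n1: "real n - 1 > 0" using assms by simp
  have Kiff: "K < 0 \<longleftrightarrow> \<gamma> > gamma_max n \<mu> \<sigma> zs"
    unfolding K_def gamma_max_def Lq mstar_def using n1 by (simp add: mult_less_0_iff) linarith
  show ?thesis
  proof (intro conjI impI)
    assume "\<gamma> > gamma_max n \<mu> \<sigma> zs"
    then have "K < 0" using Kiff by simp
    then have "A = {}" unfolding A_def by (auto simp: not_le intro: less_le_trans)
    then show "alpha M X n \<tau> \<mu> \<sigma> zs \<gamma> = 0" using alpha_eq by simp
  next
    assume "\<gamma> \<le> gamma_max n \<mu> \<sigma> zs"
    then have K0: "K \<ge> 0" using Kiff by simp
    have b: "b_fun n \<mu> \<sigma> zs \<gamma> = sqrt K" unfolding b_fun_def K_def ..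
    have "A = {a_const n \<mu> \<sigma> zs - sqrt K .. a_const n \<mu> \<sigma> zs + sqrt K}"
    proof -
      have "(x - a)\<^sup>2 \<le> K \<longleftrightarrow> \<bar>x - a\<bar> \<le> sqrt K" for x a :: real
        using K0 by (metis real_sqrt_abs real_sqrt_le_iff)
      then show ?thesis unfolding A_def by (auto simp: abs_le_iff)
    qed
    then show "alpha M X n \<tau> \<mu> \<sigma> zs \<gamma> = Phi (a_const n \<mu> \<sigma> zs + b_fun n \<mu> \<sigma> zs \<gamma>)
              - Phi (a_const n \<mu> \<sigma> zs - b_fun n \<mu> \<sigma> zs \<gamma>)"
      using alpha_eq b Phi_diff[of "a_const n \<mu> \<sigma> zs - sqrt K" "a_const n \<mu> \<sigma> zs + sqrt K"] K0
      by simp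
  qed
qed

end
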